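(* Let $0<a<m<b<1$ and let $g(u)=0$ if $u<a$, $g(u)=1$ if $a\le u\le b$, $g(u)=m$ if $u>b$. Let $k:\mathbb R\to\mathbb R$ be a piecewise differentiable function satisfying: (H1) $k\ge 0$ and $\int_{-\infty}^{\infty}k(x)\,dx=1$; (H2) $k(x)=k(-x)$ for all $x$; (H3) $k(x)>0$ on $(-\sigma,\sigma)$ for some $0<\sigma\le\infty$; (H4) for all $\lambda\in(0,1)$ and $A>B$, $x\mapsto k(x-A)-\lambda k(x-B)$ has fewer than $2$ sign changes; (H5) for all $\lambda\in(0,1)$ and $A>B$, $x\mapsto k(x-r-A)-\lambda k(x-r-B)-k(x+r+A)+\lambda k(x+r+B)$ has fewer than $4$ sign changes for all sufficiently large $r>0$. Let $Q[u](x)=\int_{-\infty}^{\infty}k(x-y)g(u(y))\,dy$, $w_1(x)=\int_x^\infty k(y)\,dy$, $c^*=\tfrac12\sup\{x: Q[w_1](x)=a\}$, $w_2(x)=Q[w_1](x+c^* )$, and $W_n(x)=w_1(x-nc^* )$ for $n$ even, $W_n(x)=w_2(x-nc^* )$ for $n$ odd. For $i=1,2$ let $\Phi_i(\ell)=\sup\{x\in\mathbb R: w_i(x)=\ell\}$, and for $\ell\in(0,m)$ let $\xi_n(\ell)=\sup\{x\in\mathbb R: W_n(x)=\ell\}$ and, for $n\ge1$, $c_n(\ell)=\xi_n(\ell)-\xi_{n-1}(\ell)$. Assume $\|w_2\|_\infty<b$. Then for all $\ell\in(0,m)$ and all $n\ge1$, $c_n(\ell)=c^*+\Phi_1(\ell)-\Phi_2(\ell)$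 if $n$ is even, and $c_n(\ell)=c^*+\Phi_2(\ell)-\Phi_1(\ell)$ if $n$ is odd.
   Context: $\|\cdot\|_\infty$ is the supremum norm. *)

theory Defs
  imports "HOL-Analysis.Analysis"
begin

definition gfun :: "real \<Rightarrow> real \<Rightarrow> real \<Rightarrow> real \<Rightarrow> real" where
  "gfun a m b u = (if u < a then 0 else if u \<le> b then 1 else m)"

definition piecewise_diff :: "(real \<Rightarrow> real) \<Rightarrow> bool" where
  "piecewise_diff k \<longleftrightarrow> (\<exists>S. (\<forall>p q. finite (S \<inter> {p..q})) \<and> (\<forall>x. x \<notin> S \<longrightarrow> k differentiable (at x)))"

definition sign_changes_ge :: "(real \<Rightarrow> real) \<Rightarrow> nat \<Rightarrow> bool" where
  "sign_changes_ge f n \<longleftrightarrow> (\<exists>x :: nat \<Rightarrow> real.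
      (\<forall>i<n. x i < x (Suc i)) \<and> (\<forall>i<n. f (x i) * f (x (Suc i)) < 0))"

definition Qop :: "(real \<Rightarrow> real) \<Rightarrow> real \<Rightarrow> real \<Rightarrow> real \<Rightarrow> (real \<Rightarrow> real) \<Rightarrow> real \<Rightarrow> real" where
  "Qop k a m b u x = integral UNIV (\<lambda>y. k (x - y) * gfun a m b (u y))"

definition w1 :: "(real \<Rightarrow> real) \<Rightarrow> real \<Rightarrow> real" where
  "w1 k x = integral {x..} k"

definition cstar :: "(real \<Rightarrow> real) \<Rightarrow> real \<Rightarrow> real \<Rightarrow> real \<Rightarrow> real" where
  "cstar k a m b = Sup {x. Qop k a m b (w1 k) x = a} / 2"

definition w2 :: "(real \<Rightarrow> real) \<Rightarrow> real \<Rightarrow> real \<Rightarrow> real \<Rightarrow> real \<Rightarrow> real" where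
  "w2 k a m b x = Qop k a m b (w1 k) (x + cstar k a m b)"

definition Wn :: "(real \<Rightarrow> real) \<Rightarrow> real \<Rightarrow> real \<Rightarrow> real \<Rightarrow> nat \<Rightarrow> real \<Rightarrow> real" where
  "Wn k a m b n x = (if even n then w1 k (x - real n * cstar k a m b)
                     else w2 k a m b (x - real n * cstar k a m b))"

definition lastlevel :: "(real \<Rightarrow> real) \<Rightarrow> real \<Rightarrow> real" where
  "lastlevel f l = Sup {x. f x = l}"

end

theory Submission
  imports Defs
begin

locale kern =
  fixes k :: "real \<Rightarrow> real"
  assumes k0: "\<And>x. k x \<ge> 0" and kint: "(k has_integral 1) UNIV"
begin

lemma kL: "integrable lebesgue k"
proof -
  have "k absolutely_integrable_on UNIV"
    using kint k0 by (intro nonnegative_absolutely_integrable_1) auto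
  then show ?thesis by (simp add: set_integrable_def)
qed

lemma k_on: assumes "S \<in> sets lebesgue" shows "k integrable_on S"
proof -
  have "k absolutely_integrable_on UNIV"
    using kint k0 by (intro nonnegative_absolutely_integrable_1) auto
  then have "k absolutely_integrable_on S"
    using set_integrable_subset assms by blast
  then show ?thesis using set_lebesgue_integral_eq_integral(1) by blast
qed

lemma w1_split: assumes "s \<le> t" shows "w1 k s = integral {s..t} k + w1 k t"
proof -
  have "(k has_integral (integral {s..t} k + integral {t..} k)) ({s..t} \<union> {t..})"
  proof (rule has_integral_Un)
    have "{s..t} \<inter> {t..} = {t}" using assms by auto
    then show "negligible ({s..t} \<inter> {t..})" by simp
  qed (auto intro!: integrable_integral k_on)
  moreover have "{s..t} \<union> {t..} = {s..}" using assms by auto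
  ultimately show ?thesis unfolding w1_def by (metis integral_unique)
qed

lemma w1_nonneg: "w1 k s \<ge> 0"
  unfolding w1_def using k0 by (intro integral_nonneg k_on) auto

lemma w1_le1: "w1 k s \<le> 1"
proof -
  have "integral {s..} k \<le> integral UNIV k"
    by (rule integral_subset_le) (auto intro: k_on simp: k0)
  then show ?thesis unfolding w1_def using kint by (simp add: integral_unique)
qed

lemma w1_mono: "s \<le> t \<Longrightarrow> w1 k t \<le> w1 k s"
  using w1_split[of s t] integral_nonneg[of k "{s..t}"] k0 k_on[of "{s..t}"] by auto

lemma w1_cont: "continuous_on UNIV (w1 k)"
proof -
  have "isCont (w1 k) x" for x
  proof -
    have c: "continuous_on {x-1..x+1} (\<lambda>y. integral {x-1..y} k)"
      by (rule indefinite_integral_continuous_1) (auto intro: k_on)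
    have "continuous_on {x-1..x+1} (\<lambda>y. w1 k (x-1) - integral {x-1..y} k)"
      by (intro continuous_intros c)
    then have "continuous_on {x-1..x+1} (w1 k)"
      by (rule continuous_on_eq) (use w1_split[of "x-1"] in auto)
    then show ?thesis
      by (rule continuous_on_interior) auto
  qed
  then show ?thesis by (simp add: continuous_at_imp_continuous_on)
qed

lemma w1_lim: assumes "e > 0" shows "\<exists>B. \<forall>x\<ge>B. w1 k x < e \<and> w1 k (-x) > 1 - e"
proof -
  from kint[unfolded has_integral_alt'] assms obtain B where B: "B > 0"
    "\<And>a b. ball 0 B \<subseteq> cbox a b \<Longrightarrow> norm (integral (cbox a b) k - 1) < e"
    by auto
  show ?thesis
  proof (intro exI allI impI)
    fix x assume x: "B \<le> x"
    have "ball 0 B \<subseteq> cbox (-x) x" using x by (auto simp: dist_real_def)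
    then have i: "integral {-x..x} k > 1 - e" using B(2)[of "-x" x] by auto
    have sp: "w1 k (-x) = integral {-x..x} k + w1 k x" using w1_split[of "-x" x] x B by auto
    show "w1 k x < e \<and> w1 k (-x) > 1 - e"
      using i sp w1_le1[of "-x"] w1_nonneg[of x] by auto
  qed
qed

lemma conv:
  "((\<lambda>y. k (x - y) * indicator {..t} y) has_integral w1 k (x - t)) UNIV"
proof -
  define h where "h z = indicator {x-t..} z * k z" for z
  have hL: "integrable lebesgue h"
    unfolding h_def using kL by (subst mult.commute) (intro integrable_real_mult_indicator, auto)
  have eq: "(\<lambda>y. h (x + -1 * y)) = (\<lambda>y. k (x - y) * indicator {..t} y)"
    by (auto simp: h_def indicator_def fun_eq_iff)
  have h2: "integrable lebesgue (\<lambda>y. k (x - y) * indicator {..t} y)"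
    using lebesgue_integrable_real_affine[OF hL, of "-1" x] eq by simp
  have "integral\<^sup>L lebesgue h = \<bar>-1\<bar> *\<^sub>R integral\<^sup>L lebesgue (\<lambda>y. h (x + -1 * y))"
    by (rule lebesgue_integral_real_affine) simp
  then have e1: "integral\<^sup>L lebesgue (\<lambda>y. k (x - y) * indicator {..t} y) = integral\<^sup>L lebesgue h"
    using eq by simp
  have "integral UNIV h = integral {x-t..} k"
  proof -
    have "h = (\<lambda>z. if z \<in> {x-t..} then k z else 0)" by (auto simp: h_def fun_eq_iff)
    then show ?thesis by (simp only: integral_restrict_UNIV)
  qed
  then have "integral\<^sup>L lebesgue h = w1 k (x - t)"
    using integral_lebesgue[OF hL] by (simp add: w1_def)
  then show ?thesis using has_integral_integral_lebesgue[OF h2] e1 by simp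
qed

lemma down_sup:
  fixes S :: "real set"
  assumes "S \<noteq> {}" "bdd_above S" "\<And>y z. y \<in> S \<Longrightarrow> z \<le> y \<Longrightarrow> z \<in> S" "y \<noteq> Sup S"
  shows "y \<in> S \<longleftrightarrow> y \<le> Sup S"
proof
  assume "y \<in> S" then show "y \<le> Sup S" using assms cSup_upper by blast
next
  assume "y \<le> Sup S"
  then have "y < Sup S" using assms(4) by simp
  then obtain z where "z \<in> S" "y < z" using less_cSup_iff[OF assms(1,2)] by blast
  then show "y \<in> S" using assms(3) by simp
qed

lemma level_sets:
  assumes "0 < v" "v < 1"
  shows "{y. w1 k y > v} \<noteq> {}" "bdd_above {y. w1 k y > v}"
        "{y. w1 k y \<ge> v} \<noteq> {}" "bdd_above {y. w1 k y \<ge> v}"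
proof -
  obtain B where B: "\<And>x. x \<ge> B \<Longrightarrow> w1 k x < v \<and> w1 k (-x) > 1 - (1 - v)/2"
    using w1_lim[of "min v ((1 - v)/2)"] assms by force
  have "1 - (1 - v)/2 > v" using assms by (simp add: field_simps)
  then have "w1 k (- B) > v" using B[of B] by linarith
  then show "{y. w1 k y > v} \<noteq> {}" "{y. w1 k y \<ge> v} \<noteq> {}" by (auto intro!: exI[of _ "-B"])
  have "y \<le> B" if "w1 k y \<ge> v" for y using B[of y] that by force
  then show "bdd_above {y. w1 k y > v}" "bdd_above {y. w1 k y \<ge> v}"
    by (auto intro!: bdd_aboveI[of _ B])
qed

lemma Q_formula:
  assumes ab: "0 < a" "a < b" "b < 1"
  defines "p \<equiv> Sup {y. w1 k y > b}" and "q \<equiv> Sup {y. w1 k y \<ge> a}"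
  shows "Qop k a m b (w1 k) x = (m - 1) * w1 k (x - p) + w1 k (x - q)"
proof -
  have P: "y \<noteq> p \<Longrightarrow> (w1 k y > b \<longleftrightarrow> y \<le> p)" for y
    unfolding p_def using level_sets(1,2)[of b] ab down_sup[of "{y. w1 k y > b}" y]
    by (auto intro: less_le_trans w1_mono)
  have Qq: "y \<noteq> q \<Longrightarrow> (w1 k y \<ge> a \<longleftrightarrow> y \<le> q)" for y
    unfolding q_def using level_sets(3,4)[of a] ab down_sup[of "{y. w1 k y \<ge> a}" y]
    by (auto intro: order_trans w1_mono)
  have g: "k (x - y) * gfun a m b (w1 k y) =
           (m - 1) * (k (x - y) * indicator {..p} y) + k (x - y) * indicator {..q} y"
    if "y \<in> UNIV - {p, q}" for y
    using P[of y] Qq[of y] that ab by (auto simp: gfun_def indicator_def algebra_simps)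
  have "Qop k a m b (w1 k) x =
        integral UNIV (\<lambda>y. (m - 1) * (k (x - y) * indicator {..p} y) + k (x - y) * indicator {..q} y)"
    unfolding Qop_def by (rule integral_spike[of "{p, q}"]) (use g in auto)
  also have "\<dots> = (m - 1) * w1 k (x - p) + w1 k (x - q)"
    using has_integral_add[OF has_integral_mult_right[OF conv[of x p], of "m - 1"] conv[of x q]]
    by (simp add: integral_unique)
  finally show ?thesis .
qed

lemma w1_good:
  assumes "0 < l" "l < 1"
  shows "\<exists>x0. w1 k x0 > l" "\<exists>x1. \<forall>y\<ge>x1. w1 k y < l"
proof -
  obtain B where B: "\<And>x. x \<ge> B \<Longrightarrow> w1 k x < min l (1 - l) \<and> w1 k (-x) > 1 - min l (1 - l)"
    using w1_lim[of "min l (1 - l)"] assms by force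
  show "\<exists>x0. w1 k x0 > l" using B[of B] by (intro exI[of _ "-B"]) linarith
  show "\<exists>x1. \<forall>y\<ge>x1. w1 k y < l" using B by (intro exI[of _ B]) force
qed

lemma w2_good:
  assumes ab: "0 < a" "a < m" "m < b" "b < 1" and l: "0 < l" "l < m"
  shows "continuous_on UNIV (w2 k a m b)" "\<exists>x0. w2 k a m b x0 > l" "\<exists>x1. \<forall>y\<ge>x1. w2 k a m b y < l"
proof -
  define p where "p = Sup {y. w1 k y > b}"
  define q where "q = Sup {y. w1 k y \<ge> a}"
  define c where "c = cstar k a m b"
  have W: "w2 k a m b x = (m - 1) * w1 k (x + c - p) + w1 k (x + c - q)" for x
    unfolding w2_def c_def p_def q_def using ab by (subst Q_formula) auto
  have "continuous_on UNIV (\<lambda>x. (m - 1) * w1 k (x + c - p) + w1 k (x + c - q))"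
    by (intro continuous_intros continuous_on_compose2[OF w1_cont]) auto
  then show "continuous_on UNIV (w2 k a m b)" using W by (simp add: fun_eq_iff)
  have neg: "(m - 1) * w1 k z \<ge> m - 1" for z
    using mult_left_mono_neg[OF w1_le1[of z], of "m - 1"] ab by simp
  have neg2: "(m - 1) * w1 k z \<le> 0" for z
    using w1_nonneg[of z] ab by (simp add: mult_nonpos_nonneg)
  obtain B where B: "\<And>x. x \<ge> B \<Longrightarrow> w1 k x < l \<and> w1 k (-x) > 1 - (m - l)"
    using w1_lim[of "min l (m - l)"] l by force
  show "\<exists>x0. w2 k a m b x0 > l"
  proof (intro exI[of _ "q - c - B"])
    show "w2 k a m b (q - c - B) > l"
      using W[of "q - c - B"] B[of B] neg[of "q - c - B + c - p"] by simp
  qed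
  show "\<exists>x1. \<forall>y\<ge>x1. w2 k a m b y < l"
  proof (intro exI[of _ "B - c + q"] allI impI)
    fix y assume "B - c + q \<le> y"
    then show "w2 k a m b y < l" using W[of y] B[of "y + c - q"] neg2[of "y + c - p"] by simp
  qed
qed

end

lemma shift_last:
  fixes f :: "real \<Rightarrow> real"
  assumes "continuous_on UNIV f" "f x0 > l" "\<forall>y\<ge>x1. f y < l"
  shows "lastlevel (\<lambda>x. f (x - s)) l = lastlevel f l + s"
proof -
  define L where "L = {x. f x = l}"
  define x2 where "x2 = max x1 (x0 + 1)"
  have "f x2 < l" using assms(3) by (simp add: x2_def)
  then obtain z where "x0 \<le> z" "z \<le> x2" "f z = l"
    using IVT2'[of f x2 l x0] assms(1,2) by (force simp: x2_def intro: continuous_on_subset)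
  then have ne: "L \<noteq> {}" by (auto simp: L_def)
  have ub: "y \<le> x1" if "y \<in> L" for y using that assms(3) unfolding L_def by (metis less_irrefl mem_Collect_eq nle_le)
  then have bdd: "bdd_above L" by (auto intro!: bdd_aboveI)
  have eq: "{x. f (x - s) = l} = (\<lambda>y. y + s) ` L"
    by (auto simp: L_def image_def intro!: exI[of _ "_ - s"])
  have "Sup ((\<lambda>y. y + s) ` L) = Sup L + s"
  proof (rule cSup_eq_non_empty)
    show "(\<lambda>y. y + s) ` L \<noteq> {}" using ne by simp
    show "x \<le> Sup L + s" if "x \<in> (\<lambda>y. y + s) ` L" for x
      using that cSup_upper[OF _ bdd] by auto
    show "Sup L + s \<le> y" if "\<And>x. x \<in> (\<lambda>y. y + s) ` L \<Longrightarrow> x \<le> y" for y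
    proof -
      have "Sup L \<le> y - s" using that by (intro cSup_least[OF ne]) force
      then show ?thesis by simp
    qed
  qed
  then show ?thesis unfolding lastlevel_def using eq L_def by simp
qed


theorem corollary1:
  fixes a m b :: real and k :: "real \<Rightarrow> real"
  assumes abm: "0 < a" "a < m" "m < b" "b < 1"
    and pd: "piecewise_diff k"
    and H1: "\<forall>x. k x \<ge> 0" "(k has_integral 1) UNIV"
    and H2: "\<forall>x. k x = k (- x)"
    and H3: "\<exists>\<sigma>::ereal. 0 < \<sigma> \<and> (\<forall>x. ereal \<bar>x\<bar> < \<sigma> \<longrightarrow> k x > 0)"
    and H4: "\<forall>lam A B. 0 < lam \<and> lam < 1 \<and> A > B \<longrightarrow>
               \<not> sign_changes_ge (\<lambda>x. k (x - A) - lam * k (x - B)) 2"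
    and H5: "\<forall>lam A B. 0 < lam \<and> lam < 1 \<and> A > B \<longrightarrow>
               (\<forall>\<^sub>F r in at_top. \<not> sign_changes_ge
                  (\<lambda>x. k (x - r - A) - lam * k (x - r - B) - k (x + r + A) + lam * k (x + r + B)) 4)"
    and w2_bound: "\<exists>M<b. \<forall>x. \<bar>w2 k a m b x\<bar> \<le> M"
  shows "\<forall>l\<in>{0<..<m}. \<forall>n\<ge>1.
           lastlevel (Wn k a m b n) l - lastlevel (Wn k a m b (n - 1)) l =
             (if even n then cstar k a m b + lastlevel (w1 k) l - lastlevel (w2 k a m b) l
              else cstar k a m b + lastlevel (w2 k a m b) l - lastlevel (w1 k) l)"
proof (intro ballI allI impI)
  fix l :: real and n :: nat
  assume l: "l \<in> {0<..<m}" and n: "1 \<le> n"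
  interpret kern k using H1 by unfold_locales auto
  define c where "c = cstar k a m b"
  have l1: "0 < l" "l < 1" using l abm by auto
  obtain x0 where x0: "w1 k x0 > l" using w1_good(1)[OF l1] by blast
  obtain x1 where x1: "\<forall>y\<ge>x1. w1 k y < l" using w1_good(2)[OF l1] by blast
  obtain y0 where y0: "w2 k a m b y0 > l" using w2_good(2)[OF abm] l by auto
  obtain y1 where y1: "\<forall>y\<ge>y1. w2 k a m b y < l" using w2_good(3)[OF abm] l by auto
  have S1: "lastlevel (\<lambda>x. w1 k (x - s)) l = lastlevel (w1 k) l + s" for s
    by (rule shift_last[OF w1_cont x0 x1])
  have S2: "lastlevel (\<lambda>x. w2 k a m b (x - s)) l = lastlevel (w2 k a m b) l + s" for s
    by (rule shift_last[OF w2_good(1)[OF abm] y0 y1]) (use l in auto)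
  have rn: "real (n - 1) = real n - 1" using n by simp
  show "lastlevel (Wn k a m b n) l - lastlevel (Wn k a m b (n - 1)) l =
             (if even n then cstar k a m b + lastlevel (w1 k) l - lastlevel (w2 k a m b) l
              else cstar k a m b + lastlevel (w2 k a m b) l - lastlevel (w1 k) l)"
  proof (cases "even n")
    case True
    then have "odd (n - 1)" using n by simp
    have A: "Wn k a m b n = (\<lambda>x. w1 k (x - real n * c))" using True by (simp add: Wn_def c_def fun_eq_iff)
    have B: "Wn k a m b (n - 1) = (\<lambda>x. w2 k a m b (x - (real n - 1) * c))"
      using \<open>odd (n - 1)\<close> rn by (simp add: Wn_def c_def fun_eq_iff)
    show ?thesis unfolding A B S1 S2 using True by (simp add: c_def algebra_simps)
  next
    case False
    then have "even (n - 1)" using n by simp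
    have A: "Wn k a m b n = (\<lambda>x. w2 k a m b (x - real n * c))" using False by (simp add: Wn_def c_def fun_eq_iff)
    have B: "Wn k a m b (n - 1) = (\<lambda>x. w1 k (x - (real n - 1) * c))"
      using \<open>even (n - 1)\<close> rn by (simp add: Wn_def c_def fun_eq_iff)
    show ?thesis unfolding A B S1 S2 using False by (simp add: c_def algebra_simps)
  qed
qed

end
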